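(* Let $G$ be a group and let $V$ be a finite-dimensional vector space. Suppose that $\tau\in\mathrm{LNUCA}_c(G,V)$ is left-invertible. Then $\tau$ is stably injective.
   Context: For $g\in G$ and $x\in V^G$, $(gx)(h)=x(g^{-1}h)$. For $M\subset G$, a set $S$ of maps $V^M\to V$ and $s\in S^G$, the NUCA $\sigma_s\colon V^G\to V^G$ is $\sigma_s(x)(g)=s(g)((g^{-1}x)\vert_M)$; it has finite memory if $M$ is finite. $\mathrm{LNUCA}_c(G,V)$ is the set of $\sigma_s$ with $M$ finite, $s\in\mathcal{L}(V^M,V)^G$ constant outside some finite subset of $G$. $\tau$ is left-invertible if there is a NUCA $\sigma\colon V^G\to V^G$ with finite memory such that $\sigma\circ\tau=\mathrm{Id}$. For $s\in S^G$, $\Sigma(s)$ is the closure of $\{gs:g\in G\}$ in $S^G$ (prodiscrete topology); $\tau=\sigma_s$ is stably injective if $\sigma_p$ is injective for every $p\in\Sigma(s)$. *)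

theory Defs
  imports Main "HOL.Vector_Spaces"
begin

text \<open>Groups are modelled by the type class group_add (written additively:
  the product g h is g + h, the inverse of g is - g).  A map V^M -> V is represented by a function
  f :: ('g => 'v) => 'v that only depends on the values on M
  (f u = f (restr M u)), so that such f correspond bijectively to maps V^M -> V.\<close>

definition restr :: "'g set \<Rightarrow> ('g \<Rightarrow> 'v::zero) \<Rightarrow> 'g \<Rightarrow> 'v" where
  "restr M u = (\<lambda>h. if h \<in> M then u h else 0)"

definition shift :: "'g::group_add \<Rightarrow> ('g \<Rightarrow> 'a) \<Rightarrow> 'g \<Rightarrow> 'a" where
  "shift g x = (\<lambda>h. x (- g + h))"

definition local_rule :: "'g set \<Rightarrow> (('g \<Rightarrow> 'v::zero) \<Rightarrow> 'v) \<Rightarrow> bool" where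
  "local_rule M f \<longleftrightarrow> (\<forall>u. f u = f (restr M u))"

definition linear_rule ::
  "('k \<Rightarrow> 'v \<Rightarrow> 'v) \<Rightarrow> 'g set \<Rightarrow> (('g \<Rightarrow> 'v::ab_group_add) \<Rightarrow> 'v) \<Rightarrow> bool" where
  "linear_rule scale M f \<longleftrightarrow> local_rule M f
     \<and> (\<forall>u w. f (\<lambda>h. u h + w h) = f u + f w)
     \<and> (\<forall>c u. f (\<lambda>h. scale c (u h)) = scale c (f u))"

definition nuca :: "'g::group_add set \<Rightarrow> ('g \<Rightarrow> ('g \<Rightarrow> 'v::zero) \<Rightarrow> 'v)
    \<Rightarrow> ('g \<Rightarrow> 'v) \<Rightarrow> 'g \<Rightarrow> 'v" where
  "nuca M s x = (\<lambda>g. s g (restr M (shift (- g) x)))"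

text \<open>Sigma(s): closure of the orbit {g s} in the prodiscrete topology, i.e.
  p is in it iff every finite window of p agrees with some translate g s.\<close>
definition orbit_closure :: "('g::group_add \<Rightarrow> 'a) \<Rightarrow> ('g \<Rightarrow> 'a) set" where
  "orbit_closure s = {p. \<forall>F. finite F \<longrightarrow> (\<exists>g. \<forall>h\<in>F. p h = shift g s h)}"

definition stably_injective :: "'g::group_add set \<Rightarrow> ('g \<Rightarrow> ('g \<Rightarrow> 'v::zero) \<Rightarrow> 'v) \<Rightarrow> bool" where
  "stably_injective M s \<longleftrightarrow> (\<forall>p\<in>orbit_closure s. inj (nuca M p))"

definition left_invertible :: "(('g::group_add \<Rightarrow> 'v::zero) \<Rightarrow> ('g \<Rightarrow> 'v)) \<Rightarrow> bool" where
  "left_invertible \<tau> \<longleftrightarrow> (\<exists>M' (s' :: 'g \<Rightarrow> ('g \<Rightarrow> 'v) \<Rightarrow> 'v).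
      finite M' \<and> (\<forall>g. local_rule M' (s' g)) \<and> nuca M' s' \<circ> \<tau> = id)"

definition LNUCA_c_rule :: "('k \<Rightarrow> 'v \<Rightarrow> 'v) \<Rightarrow> 'g set \<Rightarrow> ('g \<Rightarrow> ('g \<Rightarrow> 'v::ab_group_add) \<Rightarrow> 'v) \<Rightarrow> bool" where
  "LNUCA_c_rule scale M s \<longleftrightarrow> finite M \<and> (\<forall>g. linear_rule scale M (s g))
     \<and> (\<exists>E. finite E \<and> (\<forall>g h. g \<notin> E \<longrightarrow> h \<notin> E \<longrightarrow> s g = s h))"

end

theory Submission
  imports Defs
begin

lemma shift_shift: "shift a (shift b x) = shift (a + b) x"
  by (rule ext) (simp add: shift_def minus_add add.assoc[symmetric])

lemma shift_zero: "shift 0 x = x"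
  by (rule ext) (simp add: shift_def)

lemma shift_inv: "shift (-a) (shift a x) = x"
  by (simp add: shift_shift shift_zero)

lemma shift_inj: "shift a x = shift a y \<Longrightarrow> x = y"
  by (metis shift_inv)

lemma nuca_shift: "nuca M (shift g s) x = shift g (nuca M s (shift (-g) x))"
proof (rule ext)
  fix k
  have "shift (- (- g + k)) (shift (-g) x) = shift (-k) x"
    by (rule ext) (simp add: shift_def add.assoc)
  then show "nuca M (shift g s) x k = shift g (nuca M s (shift (-g) x)) k"
    by (simp add: nuca_def shift_def)
qed

lemma nuca_app: "nuca M s x k = s k (restr M (shift (-k) x))"
  by (simp add: nuca_def)

lemma shift_const: "shift g (\<lambda>_. c) = (\<lambda>_. c)"
  by (simp add: shift_def)

lemma nuca_const_shift: "nuca M (\<lambda>_. c) (shift a x) = shift a (nuca M (\<lambda>_. c) x)"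
  using nuca_shift[of M a "\<lambda>_. c" "shift a x"] by (simp add: shift_const shift_inv)

lemma orbit_classify:
  fixes s :: "'a::group_add \<Rightarrow> 'b" and p :: "'a \<Rightarrow> 'b"
  assumes p: "p \<in> orbit_closure s" and fE: "finite E"
    and cst: "\<forall>g h. g \<notin> E \<longrightarrow> h \<notin> E \<longrightarrow> s g = s h"
  shows "(\<exists>g. p = shift g s) \<or> (infinite (UNIV::'a set) \<and> (\<exists>g0. g0 \<notin> E \<and> p = (\<lambda>_. s g0)))"
proof (cases "finite (UNIV::'a set)")
  case True
  have "finite (UNIV::'a set) \<longrightarrow> (\<exists>g. \<forall>h\<in>UNIV. p h = shift g s h)"
    using p unfolding orbit_closure_def mem_Collect_eq by (rule spec)
  then obtain g where "\<forall>h\<in>UNIV. p h = shift g s h" using True by blast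
  then have "p = shift g s" by (simp add: fun_eq_iff)
  then show ?thesis by blast
next
  case inf: False
  show ?thesis
  proof (cases "\<exists>h0 g0. g0 \<notin> E \<and> p h0 \<noteq> s (g0::'a)")
    case False
    obtain g0 where "g0 \<notin> (E::'a set)" using inf fE by (metis UNIV_I ex_new_if_finite)
    with False have "p = (\<lambda>_. s g0)" by auto
    then show ?thesis using inf \<open>g0 \<notin> E\<close> by blast
  next
    case True
    then obtain h0 g0 where g0: "g0 \<notin> E" and ph0: "p h0 \<noteq> s g0" by blast
    define C where "C = (\<lambda>e. h0 + - e) ` E"
    have fC: "finite C" using fE by (simp add: C_def)
    have inC: "g \<in> C" if "p h0 = shift g s h0" for g
    proof -
      have "s (-g + h0) \<noteq> s g0" using that ph0 by (simp add: shift_def)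
      then have "-g + h0 \<in> E" using cst g0 by blast
      moreover have "g = h0 + - (-g + h0)" by (simp add: minus_add add.assoc)
      ultimately show ?thesis unfolding C_def by blast
    qed
    show ?thesis
    proof (rule ccontr)
      assume "\<not> ?thesis"
      then have "\<forall>g. \<exists>h. p h \<noteq> shift g s h" by (auto simp: fun_eq_iff)
      then obtain hf where hf: "\<And>g. p (hf g) \<noteq> shift g s (hf g)" by metis
      have "finite (insert h0 (hf ` C))" using fC by simp
      then obtain g where g: "\<forall>h\<in>insert h0 (hf ` C). p h = shift g s h"
        using p unfolding orbit_closure_def by blast
      then have "g \<in> C" using inC by simp
      then show False using g hf by auto
    qed
  qed
qed

theorem theorem4p3:
  fixes scale :: "'k::field \<Rightarrow> 'v::ab_group_add \<Rightarrow> 'v"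
    and B :: "'v set"
    and M :: "'g::group_add set"
    and s :: "'g \<Rightarrow> ('g \<Rightarrow> 'v) \<Rightarrow> 'v"
  assumes "finite_dimensional_vector_space scale B"
    and "LNUCA_c_rule scale M s"
    and "left_invertible (nuca M s)"
  shows "stably_injective M s"
proof -
  have "\<exists>E. finite E \<and> (\<forall>g h. g \<notin> E \<longrightarrow> h \<notin> E \<longrightarrow> s g = s h)"
    using assms(2) unfolding LNUCA_c_rule_def by (rule conjunct2[OF conjunct2])
  then obtain E where fE: "finite E" and cst: "\<forall>g h. g \<notin> E \<longrightarrow> h \<notin> E \<longrightarrow> s g = s h"
    by blast
  obtain M' and s' :: "'g \<Rightarrow> ('g \<Rightarrow> 'v) \<Rightarrow> 'v" where fM': "finite M'"
    and inv: "nuca M' s' \<circ> nuca M s = id"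
    using assms(3) unfolding left_invertible_def by blast
  have invx: "nuca M' s' (nuca M s x) = x" for x using fun_cong[OF inv, of x] by simp
  have injs: "inj (nuca M s)"
  proof (rule injI)
    fix x y assume "nuca M s x = nuca M s y"
    then have "nuca M' s' (nuca M s x) = nuca M' s' (nuca M s y)" by simp
    then show "x = y" by (simp add: invx)
  qed
  show ?thesis unfolding stably_injective_def
  proof
    fix p assume p: "p \<in> orbit_closure s"
    from orbit_classify[OF p fE cst] show "inj (nuca M p)"
    proof
      assume "\<exists>g. p = shift g s"
      then obtain g where pg: "p = shift g s" by blast
      show ?thesis
      proof (rule injI)
        fix x y assume "nuca M p x = nuca M p y"
        then have "shift g (nuca M s (shift (-g) x)) = shift g (nuca M s (shift (-g) y))"
          by (simp add: pg nuca_shift)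
        then have "nuca M s (shift (-g) x) = nuca M s (shift (-g) y)"
          by (rule shift_inj)
        then have "shift (-g) x = shift (-g) y" using injs by (simp add: inj_eq)
        then show "x = y" by (rule shift_inj)
      qed
    next
      assume "infinite (UNIV::'g set) \<and> (\<exists>g0. g0 \<notin> E \<and> p = (\<lambda>_. s g0))"
      then obtain g0 where inf: "infinite (UNIV::'g set)" and g0: "g0 \<notin> E"
        and pc: "p = (\<lambda>_. s g0)" by blast
      define c where "c = s g0"
      have sc: "s j = c" if "j \<notin> E" for j by (simp add: c_def cst[rule_format, OF that g0])
      define T where "T = nuca M (\<lambda>_. c)"
      define D where "D = (\<lambda>(e, m). e + - m) ` (E \<times> M')"
      have fD: "finite D" using fE fM' by (simp add: D_def)
      have key: "x k = y k" if Txy: "T x = T y" and k: "k \<notin> D" for x y k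
      proof -
        have km: "k + m \<notin> E" if "m \<in> M'" for m
        proof
          assume "k + m \<in> E"
          then have "(k + m, m) \<in> E \<times> M'" using that by simp
          then have "(\<lambda>(e, m). e + - m) (k + m, m) \<in> D" unfolding D_def by (rule imageI)
          then have "k \<in> D" by (simp add: add.assoc)
          with k show False by simp
        qed
        have "restr M' (shift (-k) (nuca M s x)) = restr M' (shift (-k) (nuca M s y))"
        proof (rule ext)
          fix h
          show "restr M' (shift (-k) (nuca M s x)) h = restr M' (shift (-k) (nuca M s y)) h"
          proof (cases "h \<in> M'")
            case True
            have "nuca M s x (k + h) = T x (k + h)" "nuca M s y (k + h) = T y (k + h)"
              using sc[OF km[OF True]] by (simp_all add: T_def nuca_def)
            then show ?thesis using True Txy by (simp add: restr_def shift_def)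
          qed (simp add: restr_def)
        qed
        then have "nuca M' s' (nuca M s x) k = nuca M' s' (nuca M s y) k"
          unfolding nuca_app by (rule arg_cong)
        then show ?thesis by (simp add: invx)
      qed
      obtain k where k: "k \<notin> D" using ex_new_if_finite[OF inf fD] by blast
      show ?thesis unfolding pc c_def[symmetric] T_def[symmetric]
      proof (rule injI)
        fix x y assume Txy: "T x = T y"
        show "x = y"
        proof
          fix k0
          define a where "a = k + - k0"
          have "T (shift a x) = T (shift a y)"
            using Txy by (simp add: T_def nuca_const_shift)
          then have "shift a x k = shift a y k" using key k by blast
          moreover have "- a + k = k0" by (simp add: a_def minus_add add.assoc)
          ultimately show "x k0 = y k0" by (simp add: shift_def)
        qed
      qed
    qed
  qed
qed

end
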